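(* Let $N\in\{\tfrac12,1,\tfrac32,2,\dots\}$, $n\in\{0,1,\dots,\lfloor N+\tfrac12\rfloor\}$, and $\alpha\in\mathbb{C}$ with $\alpha+1$ not a nonpositive integer. Then for all $x\in\mathbb{C}$: $${}_3F_2\!\left(\begin{matrix}-2n,\,2n+2\alpha+1,\,-x-N-\frac12\\ \alpha+1,\,-2N-1\end{matrix};1\right)={}_4F_3\!\left(\begin{matrix}-n,\,n+\alpha+\frac12,\,-x-N-\frac12,\,x-N-\frac12\\ \alpha+1,\,-N-\frac12,\,-N\end{matrix};1\right),$$ i.e. $Q_{2n}(x+N+\tfrac12;\alpha,\alpha,2N+1)=R_n\big(x^2-(N+\tfrac12)^2;\alpha,-\tfrac12,-N-1,-N-1\big)$ in terms of Hahn and Racah polynomials.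
   Context: ${}_rF_s$ is the generalized hypergeometric series with Pochhammer symbols $(c)_k=c(c+1)\cdots(c+k-1)$, terminating here via the numerator $-2n$ resp. $-n$. Hahn: $Q_n(x;\alpha,\beta,N)={}_3F_2(-n,n+\alpha+\beta+1,-x;\alpha+1,-N;1)$. Racah: $R_n(y(y+\gamma+\delta+1);\alpha,\beta,\gamma,\delta)={}_4F_3(-n,n+\alpha+\beta+1,-y,y+\gamma+\delta+1;\alpha+1,\beta+\delta+1,\gamma+1;1)$. *)

theory Defs
  imports Complex_Main
begin

text \<open>Used here only for terminating
  series (some numerator parameter is a nonpositive integer), where all terms
  beyond the terminating index vanish.\<close>
definition hyp_term :: "complex list \<Rightarrow> complex list \<Rightarrow> complex \<Rightarrow> nat \<Rightarrow> complex" where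
  "hyp_term as bs z k =
     (\<Prod>a\<leftarrow>as. pochhammer a k) / (\<Prod>b\<leftarrow>bs. pochhammer b k) * z ^ k / fact k"

definition hypergeom :: "complex list \<Rightarrow> complex list \<Rightarrow> complex \<Rightarrow> complex" where
  "hypergeom as bs z = (\<Sum>k. hyp_term as bs z k)"

end

theory Submission imports Defs "HOL-Computational_Algebra.Polynomial" begin

definition hop :: "complex \<Rightarrow> complex \<Rightarrow> complex \<Rightarrow> complex poly \<Rightarrow> complex poly" where
 "hop a b c p = [:0,1,-1:] * pderiv (pderiv p) + [:c, -(a+b+1):] * pderiv p - smult (a*b) p"

lemma hop_coeff:
  "coeff (hop a b c p) j = of_nat (Suc j) * (of_nat j + c) * coeff p (Suc j)
     - (of_nat j + a) * (of_nat j + b) * coeff p j"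
proof (cases j)
  case 0
  then show ?thesis by (simp add: hop_def coeff_pderiv mult_pCons_left algebra_simps)
next
  case (Suc i)
  then show ?thesis
    by (simp add: hop_def coeff_pderiv mult_pCons_left algebra_simps coeff_pCons split: nat.splits)
qed


lemma hop_chain:
  assumes "2*a + 2*b + 1 = 2*c"
  shows "hop (2*a) (2*b) c (pcompose F [:0,4,-4:]) = smult 4 (pcompose (hop a b c F) [:0,4,-4:])"
proof -
  let ?q = "[:0,4,-4:] :: complex poly"
  have dq: "pderiv ?q = [:4,-8:]" by (simp add: pderiv_pCons)
  have d1: "pderiv (pcompose F ?q) = pcompose (pderiv F) ?q * [:4,-8:]"
    by (simp only: pderiv_pcompose dq)
  have d2: "pderiv (pderiv (pcompose F ?q)) = pcompose (pderiv (pderiv F)) ?q * [:4,-8:] * [:4,-8:]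
      + pcompose (pderiv F) ?q * [:-8:]"
    unfolding d1 pderiv_mult pderiv_pcompose dq by (simp add: pderiv_pCons algebra_simps)
  have c: "c = a + b + 1/2" using assms by (simp add: field_simps)
  have "poly (hop (2*a) (2*b) c (pcompose F ?q)) x =
        poly (smult 4 (pcompose (hop a b c F) ?q)) x" for x
    unfolding hop_def d2 unfolding d1
    by (simp add: pcompose_mult poly_pcompose c algebra_simps)
  then show ?thesis using poly_eq_poly_eq_iff by blast
qed

lemma hop_unique:
  assumes "hop a b c p = 0" "hop a b c q = 0" "coeff p 0 = coeff q 0"
    and "\<And>j. of_nat j + c \<noteq> 0"
  shows "p = q"
proof -
  have "coeff p j = coeff q j" for j
  proof (induction j)
    case 0 then show ?case using assms by simp
  next
    case (Suc j)
    have "coeff (hop a b c p) j = 0" "coeff (hop a b c q) j = 0" using assms by auto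
    then have "of_nat (Suc j) * (of_nat j + c) * coeff p (Suc j) = of_nat (Suc j) * (of_nat j + c) * coeff q (Suc j)"
      using Suc by (simp add: hop_coeff)
    moreover have "of_nat (Suc j) * (of_nat j + c) \<noteq> (0::complex)" using assms(4)[of j]
      by (simp del: of_nat_Suc)
    ultimately show ?case by simp
  qed
  then show ?thesis by (simp add: poly_eq_iff)
qed

definition hh :: "complex \<Rightarrow> complex \<Rightarrow> complex \<Rightarrow> nat \<Rightarrow> complex" where
  "hh A B C k = pochhammer A k * pochhammer B k / (pochhammer C k * fact k)"

lemma hh_rec:
  assumes "\<And>j. of_nat j + C \<noteq> 0"
  shows "of_nat (Suc k) * (of_nat k + C) * hh A B C (Suc k) = (of_nat k + A) * (of_nat k + B) * hh A B C k"
proof -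
  have "pochhammer C k \<noteq> 0"
  proof
    assume "pochhammer C k = 0"
    then obtain i where "C = - of_nat i" by (auto simp: pochhammer_eq_0_iff)
    with assms[of i] show False by simp
  qed
  moreover have "of_nat k + C \<noteq> 0" "C + of_nat k \<noteq> 0" using assms[of k] by (auto simp: add.commute)
  moreover have "fact k \<noteq> (0::complex)" by simp
  ultimately show ?thesis
    unfolding hh_def pochhammer_Suc fact_Suc of_nat_mult
    by (simp add: divide_simps del: of_nat_Suc) (simp add: algebra_simps)
qed

lemma hop_hh:
  assumes "\<And>j. of_nat j + C \<noteq> 0" "\<And>k. k > K \<Longrightarrow> hh A B C k = 0"
  shows "hop A B C (\<Sum>k\<le>K. monom (hh A B C k) k) = 0"
proof -
  have co: "coeff (\<Sum>k\<le>K. monom (hh A B C k) k) i = hh A B C i" for i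
    using assms(2)[of i] by (auto simp: coeff_sum)
  show ?thesis
    by (rule poly_eqI) (simp add: hop_coeff co hh_rec[OF assms(1)] del: of_nat_Suc)
qed


lemma quad:
  fixes n :: nat and al :: complex
  assumes C: "\<And>j. of_nat j + (al+1) \<noteq> 0"
  shows "(\<Sum>j\<le>2*n. monom (hh (-of_nat(2*n)) (of_nat(2*n)+2*al+1) (al+1) j) j)
       = pcompose (\<Sum>k\<le>n. monom (hh (-of_nat n) (of_nat n + al + 1/2) (al+1) k) k) [:0,4,-4:]"
    (is "?f = pcompose ?F ?q")
proof (rule hop_unique[where a = "-of_nat(2*n)" and b = "of_nat(2*n)+2*al+1" and c = "al+1"])
  show "hop (- of_nat (2 * n)) (of_nat (2 * n) + 2 * al + 1) (al + 1) ?f = 0"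
    by (rule hop_hh[OF C]) (simp add: hh_def pochhammer_of_nat_eq_0_iff[of "2*n", simplified])
  have F0: "hop (- of_nat n) (of_nat n + al + 1/2) (al + 1) ?F = 0"
    by (rule hop_hh[OF C]) (simp add: hh_def pochhammer_of_nat_eq_0_iff)
  have e1: "2 * (- of_nat n) = (- of_nat (2*n) :: complex)" by simp
  have e2: "2 * (of_nat n + al + 1/2) = (of_nat (2*n) + 2*al + 1 :: complex)" by (simp add: algebra_simps)
  have "hop (2 * (- of_nat n)) (2 * (of_nat n + al + 1/2)) (al + 1) (pcompose ?F ?q) = 0"
  proof -
    have cond: "2*(-of_nat n) + 2*(of_nat n+al+1/2)+1 = 2*(al+1::complex)" by (simp add: algebra_simps)
    show ?thesis by (simp only: hop_chain[OF cond] F0) simp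
  qed
  then show "hop (- of_nat (2 * n)) (of_nat (2 * n) + 2 * al + 1) (al + 1) (pcompose ?F ?q) = 0"
    unfolding e1 e2 .
  have "coeff (pcompose ?F ?q) 0 = poly ?F 0"
    by (simp add: poly_0_coeff_0[symmetric] poly_pcompose)
  also have "\<dots> = 1" by (simp add: poly_0_coeff_0 coeff_sum hh_def)
  finally show "coeff ?f 0 = coeff (pcompose ?F ?q) 0" by (simp add: coeff_sum hh_def)
  show "\<And>j. of_nat j + (al + 1) \<noteq> 0" by (rule C)
qed

lemma qpow:
  "([:0,4,-4:] :: complex poly) ^ k = (\<Sum>l\<le>k. monom (4^k * (-1)^l * of_nat (k choose l)) (k+l))"
proof -
  have "poly ([:0,4,-4:] ^ k) x = poly (\<Sum>l\<le>k. monom (4^k * (-1)^l * of_nat (k choose l)) (k+l)) x"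
    for x :: complex
  proof -
    have p: "poly [:0,4,-4:] x = 4 * x * (-x + 1)" by (simp add: algebra_simps)
    have "poly ([:0,4,-4:] ^ k) x = 4^k * x^k * (-x + 1)^k"
      unfolding poly_power p by (simp only: power_mult_distrib)
    also have "(-x + 1)^k = (\<Sum>l\<le>k. of_nat (k choose l) * (-x)^l * 1^(k-l))"
      by (rule binomial_ring)
    finally have L: "poly ([:0,4,-4:] ^ k) x = (\<Sum>l\<le>k. 4^k * x^k * (of_nat (k choose l) * (-x)^l * 1^(k-l)))"
      by (simp only: sum_distrib_left)
    have R: "poly (\<Sum>l\<le>k. monom (4^k * (-1)^l * of_nat (k choose l)) (k+l)) x
       = (\<Sum>l\<le>k. 4^k * (-1)^l * of_nat (k choose l) * x^(k+l))"
      by (simp add: poly_sum poly_monom)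
    show ?thesis unfolding L R
    proof (rule sum.cong[OF refl])
      fix l
      have "(-x)^l = (-1)^l * x^l" by (rule power_minus)
      then show "4^k * x^k * (of_nat (k choose l) * (-x)^l * 1^(k-l)) = 4^k * (-1)^l * of_nat (k choose l) * x^(k+l)"
        by (simp add: power_add mult_ac)
    qed
  qed
  then show ?thesis using poly_eq_poly_eq_iff by blast
qed


lemma core:
  fixes t m :: complex
  shows "(\<Sum>l\<le>k. of_nat (k choose l) * (-1)^l * pochhammer (of_nat k - t) l
            * pochhammer (-m + of_nat (k+l)) (k-l)) = pochhammer (t-m) k"
proof -
  have "pochhammer (t-m) k = (-1)^k * pochhammer (m - t - of_nat k + 1) k"
    using pochhammer_minus[of "m-t" k] by simp
  also have "m - t - of_nat k + 1 = (of_nat k - t) + (m - 2*of_nat k + 1)" by simp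
  also have "pochhammer \<dots> k = (\<Sum>l\<le>k. of_nat (k choose l) * pochhammer (of_nat k - t) l
       * pochhammer (m - 2*of_nat k + 1) (k-l))"
    by (rule pochhammer_binomial_sum)
  also have "(-1)^k * \<dots> = (\<Sum>l\<le>k. of_nat (k choose l) * (-1)^l * pochhammer (of_nat k - t) l
            * pochhammer (-m + of_nat (k+l)) (k-l))"
    unfolding sum_distrib_left
  proof (rule sum.cong[OF refl])
    fix l assume "l \<in> {..k}"
    then have lk: "l \<le> k" by simp
    have "pochhammer (- (m - of_nat k - of_nat l)) (k-l) =
       (-1)^(k-l) * pochhammer ((m - of_nat k - of_nat l) - of_nat (k-l) + 1) (k-l)"
      by (rule pochhammer_minus)
    also have "(m - of_nat k - of_nat l) - of_nat (k-l) + 1 = m - 2*of_nat k + 1"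
      using lk by (simp add: of_nat_diff)
    finally have P: "pochhammer (-m + of_nat (k+l)) (k-l) = (-1)^(k-l) * pochhammer (m - 2*of_nat k + 1) (k-l)"
      by (simp add: algebra_simps)
    have S: "(-1::complex)^k = (-1)^l * (-1)^(k-l)"
      using lk by (simp add: power_add[symmetric])
    show "(-1)^k * (of_nat (k choose l) * pochhammer (of_nat k - t) l * pochhammer (m - 2*of_nat k + 1) (k-l))
       = of_nat (k choose l) * (-1)^l * pochhammer (of_nat k - t) l * pochhammer (-m + of_nat (k+l)) (k-l)"
      unfolding P S by (simp add: algebra_simps)
  qed
  finally show ?thesis ..
qed

lemma step2:
  fixes t m :: complex
  assumes nz: "pochhammer (-m) (2*k) \<noteq> 0"
  shows "(\<Sum>l\<le>k. (-1)^l * of_nat (k choose l) * (pochhammer (-t) (k+l) / pochhammer (-m) (k+l)))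
       = pochhammer (-t) k * pochhammer (t-m) k / pochhammer (-m) (2*k)"
proof -
  have "(\<Sum>l\<le>k. (-1)^l * of_nat (k choose l) * (pochhammer (-t) (k+l) / pochhammer (-m) (k+l)))
      = (\<Sum>l\<le>k. pochhammer (-t) k / pochhammer (-m) (2*k) * (of_nat (k choose l) * (-1)^l * pochhammer (of_nat k - t) l
            * pochhammer (-m + of_nat (k+l)) (k-l)))"
  proof (rule sum.cong[OF refl])
    fix l assume "l \<in> {..k}"
    then have lk: "l \<le> k" by simp
    have A: "pochhammer (-m) (2*k) = pochhammer (-m) (k+l) * pochhammer (-m + of_nat (k+l)) (k-l)"
      using pochhammer_product[of "k+l" "2*k" "-m"] lk by simp
    have B: "pochhammer (-t) (k+l) = pochhammer (-t) k * pochhammer (of_nat k - t) l"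
      using pochhammer_product'[of "-t" k l] by simp
    have nz1: "pochhammer (-m) (k+l) \<noteq> 0" using nz A by auto
    have nz2: "pochhammer (-m + of_nat (k+l)) (k-l) \<noteq> 0" using nz A by auto
    show "(-1)^l * of_nat (k choose l) * (pochhammer (-t) (k+l) / pochhammer (-m) (k+l)) =
      pochhammer (-t) k / pochhammer (-m) (2*k) * (of_nat (k choose l) * (-1)^l * pochhammer (of_nat k - t) l
            * pochhammer (-m + of_nat (k+l)) (k-l))"
      unfolding A B using nz1 nz2 by (simp add: field_simps)
  qed
  also have "\<dots> = pochhammer (-t) k / pochhammer (-m) (2*k) * pochhammer (t-m) k"
    by (simp only: sum_distrib_left[symmetric] core)
  finally show ?thesis by simp
qed


definition Tf :: "nat \<Rightarrow> complex \<Rightarrow> complex \<Rightarrow> complex poly \<Rightarrow> complex" where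
  "Tf K t m p = (\<Sum>j\<le>K. coeff p j * (pochhammer (-t) j / pochhammer (-m) j))"

lemma Tf_sum: "Tf K t m (\<Sum>i\<in>A. p i) = (\<Sum>i\<in>A. Tf K t m (p i))"
  unfolding Tf_def coeff_sum sum_distrib_right by (rule sum.swap)

lemma Tf_smult: "Tf K t m (smult a p) = a * Tf K t m p"
  unfolding Tf_def by (simp add: sum_distrib_left mult.assoc)

lemma Tf_monom: "j \<le> K \<Longrightarrow> Tf K t m (monom a j) = a * (pochhammer (-t) j / pochhammer (-m) j)"
proof -
  assume j: "j \<le> K"
  have "Tf K t m (monom a j) = (\<Sum>i\<le>K. if i = j then a * (pochhammer (-t) i / pochhammer (-m) i) else 0)"
    unfolding Tf_def by (rule sum.cong) auto
  also have "\<dots> = a * (pochhammer (-t) j / pochhammer (-m) j)" using j by (simp add: sum.delta')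
  finally show ?thesis .
qed

lemma pcompose_monom': "pcompose (monom a k) q = smult a (q^k)"
  by (induction k) (simp_all add: monom_0 monom_Suc pcompose_pCons)

theorem mainTheorem15:
  fixes M n :: nat and \<alpha> x N :: complex
  assumes "M \<ge> 1"
    and "N = of_nat M / 2"
    and "n \<le> (M + 1) div 2"
    and "\<forall>k::nat. \<alpha> + 1 \<noteq> - of_nat k"
  shows "hypergeom [- of_nat (2*n), of_nat (2*n) + 2*\<alpha> + 1, - x - N - 1/2]
                   [\<alpha> + 1, - 2*N - 1] 1
       = hypergeom [- of_nat n, of_nat n + \<alpha> + 1/2, - x - N - 1/2, x - N - 1/2]
                   [\<alpha> + 1, - N - 1/2, - N] 1"
proof -
  define m where "m = 2*N + 1"
  define t where "t = x + N + 1/2"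
  define c where "c = (\<lambda>j. pochhammer (-t) j / pochhammer (-m) j)"
  define e where "e = hh (-of_nat(2*n)) (of_nat(2*n)+2*\<alpha>+1) (\<alpha>+1)"
  define d where "d = hh (-of_nat n) (of_nat n + \<alpha> + 1/2) (\<alpha>+1)"
  have C: "of_nat j + (\<alpha>+1) \<noteq> 0" for j
  proof
    assume "of_nat j + (\<alpha>+1) = 0"
    then have "\<alpha>+1 = - of_nat j" by (simp add: eq_neg_iff_add_eq_0 add.commute)
    with assms(4) show False by blast
  qed
  have pC: "pochhammer (\<alpha>+1) j \<noteq> 0" for j
  proof
    assume "pochhammer (\<alpha>+1) j = 0"
    then obtain i where "\<alpha>+1 = - of_nat i" by (auto simp: pochhammer_eq_0_iff)
    with assms(4) show False by blast
  qed
  have mnat: "m = of_nat (Suc M)" unfolding m_def assms(2) by simp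
  have n2: "2*n \<le> Suc M" using assms(3) by linarith
  have nzm: "pochhammer (-m) j \<noteq> 0" if "j \<le> 2*n" for j
    unfolding mnat using that n2 by (subst pochhammer_of_nat_eq_0_iff) simp
  have e1: "- x - N - 1/2 = -t" "- 2*N - 1 = -m" "x - N - 1/2 = t - m"
    unfolding t_def m_def by (simp_all add: algebra_simps)
  have pd: "pochhammer (-N-1/2) k * pochhammer (-N) k = pochhammer (-m) (2*k) / 4^k" for k
  proof -
    have "pochhammer (2*(-N-1/2)) (2*k) = of_nat (2^(2*k)) * pochhammer (-N-1/2) k * pochhammer ((-N-1/2)+1/2) k"
      by (rule pochhammer_double)
    moreover have "2*(-N-1/2) = -m" "(-N-1/2)+1/2 = -N" unfolding m_def by (simp_all add: algebra_simps)
    moreover have "(of_nat (2^(2*k)) :: complex) = 4^k" by (simp add: power_mult)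
    ultimately show ?thesis by simp
  qed
  have L: "hypergeom [- of_nat (2*n), of_nat (2*n) + 2*\<alpha> + 1, - x - N - 1/2] [\<alpha> + 1, - 2*N - 1] 1
      = (\<Sum>j\<le>2*n. e j * c j)"
    unfolding hypergeom_def
  proof (subst suminf_finite[of "{..2*n}"])
    show "finite {..2*n}" by simp
    show "hyp_term [- of_nat (2*n), of_nat (2*n) + 2*\<alpha> + 1, - x - N - 1/2] [\<alpha> + 1, - 2*N - 1] 1 j = 0"
      if "j \<notin> {..2*n}" for j
      using that by (simp add: hyp_term_def pochhammer_of_nat_eq_0_iff[of "2*n", simplified])
    show "(\<Sum>j\<le>2*n. hyp_term [- of_nat (2*n), of_nat (2*n) + 2*\<alpha> + 1, - x - N - 1/2] [\<alpha> + 1, - 2*N - 1] 1 j)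
       = (\<Sum>j\<le>2*n. e j * c j)"
    proof (rule sum.cong[OF refl])
      fix j assume "j \<in> {..2*n}"
      then have "pochhammer (-m) j \<noteq> 0" using nzm by simp
      then show "hyp_term [- of_nat (2*n), of_nat (2*n) + 2*\<alpha> + 1, - x - N - 1/2] [\<alpha> + 1, - 2*N - 1] 1 j = e j * c j"
        unfolding hyp_term_def e1 e_def c_def hh_def using pC[of j]
        by (simp add: field_simps)
    qed
  qed
  have R: "hypergeom [- of_nat n, of_nat n + \<alpha> + 1/2, - x - N - 1/2, x - N - 1/2] [\<alpha> + 1, - N - 1/2, - N] 1
      = (\<Sum>k\<le>n. d k * (4^k * (pochhammer (-t) k * pochhammer (t-m) k / pochhammer (-m) (2*k))))"
    unfolding hypergeom_def
  proof (subst suminf_finite[of "{..n}"])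
    show "finite {..n}" by simp
    show "hyp_term [- of_nat n, of_nat n + \<alpha> + 1/2, - x - N - 1/2, x - N - 1/2] [\<alpha> + 1, - N - 1/2, - N] 1 j = 0"
      if "j \<notin> {..n}" for j
      using that by (simp add: hyp_term_def pochhammer_of_nat_eq_0_iff)
    show "(\<Sum>j\<le>n. hyp_term [- of_nat n, of_nat n + \<alpha> + 1/2, - x - N - 1/2, x - N - 1/2] [\<alpha> + 1, - N - 1/2, - N] 1 j)
       = (\<Sum>k\<le>n. d k * (4^k * (pochhammer (-t) k * pochhammer (t-m) k / pochhammer (-m) (2*k))))"
    proof (rule sum.cong[OF refl])
      fix j assume "j \<in> {..n}"
      then have nz: "pochhammer (-m) (2*j) \<noteq> 0" using nzm by simp
      have "hyp_term [- of_nat n, of_nat n + \<alpha> + 1/2, - x - N - 1/2, x - N - 1/2] [\<alpha> + 1, - N - 1/2, - N] 1 j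
         = pochhammer (- of_nat n) j * pochhammer (of_nat n + \<alpha> + 1/2) j * pochhammer (-t) j * pochhammer (t-m) j
            / (pochhammer (\<alpha>+1) j * (pochhammer (-N-1/2) j * pochhammer (-N) j)) / fact j"
        unfolding hyp_term_def e1 by (simp add: mult.assoc)
      also have "\<dots> = d j * (4^j * (pochhammer (-t) j * pochhammer (t-m) j / pochhammer (-m) (2*j)))"
        unfolding pd d_def hh_def using nz pC[of j] by (simp add: field_simps)
      finally show "hyp_term [- of_nat n, of_nat n + \<alpha> + 1/2, - x - N - 1/2, x - N - 1/2] [\<alpha> + 1, - N - 1/2, - N] 1 j
         = d j * (4^j * (pochhammer (-t) j * pochhammer (t-m) j / pochhammer (-m) (2*j)))" .
    qed
  qed
  have T1: "(\<Sum>j\<le>2*n. e j * c j) = Tf (2*n) t m (\<Sum>j\<le>2*n. monom (e j) j)"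
    unfolding Tf_sum by (rule sum.cong[OF refl]) (simp add: Tf_monom c_def)
  also have "(\<Sum>j\<le>2*n. monom (e j) j) = pcompose (\<Sum>k\<le>n. monom (d k) k) [:0,4,-4:]"
    unfolding e_def d_def by (rule quad[OF C])
  also have "\<dots> = (\<Sum>k\<le>n. smult (d k) ([:0,4,-4:] ^ k))"
    by (simp add: pcompose_sum pcompose_monom')
  also have "Tf (2*n) t m \<dots> = (\<Sum>k\<le>n. d k * (4^k * (pochhammer (-t) k * pochhammer (t-m) k / pochhammer (-m) (2*k))))"
    unfolding Tf_sum Tf_smult
  proof (rule sum.cong[OF refl])
    fix k assume "k \<in> {..n}"
    then have kn: "k \<le> n" by simp
    then have nz: "pochhammer (-m) (2*k) \<noteq> 0" using nzm by simp
    have "Tf (2*n) t m ([:0,4,-4:] ^ k) = (\<Sum>l\<le>k. 4^k * (-1)^l * of_nat (k choose l) * c (k+l))"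
      unfolding qpow Tf_sum
      by (rule sum.cong[OF refl]) (use kn in \<open>simp add: Tf_monom c_def\<close>)
    also have "\<dots> = 4^k * (\<Sum>l\<le>k. (-1)^l * of_nat (k choose l) * (pochhammer (-t) (k+l) / pochhammer (-m) (k+l)))"
      by (simp add: sum_distrib_left c_def mult.assoc)
    also have "\<dots> = 4^k * (pochhammer (-t) k * pochhammer (t-m) k / pochhammer (-m) (2*k))"
      by (simp only: step2[OF nz])
    finally show "d k * Tf (2*n) t m ([:0,4,-4:] ^ k) = d k * (4^k * (pochhammer (-t) k * pochhammer (t-m) k / pochhammer (-m) (2*k)))"
      by simp
  qed
  finally show ?thesis unfolding L R .
qed

end
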